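(* Let $M$ be an $N\times N$ and $N_0$ an $r\times N$ complex matrix. If the series $\sum_{m=0}^\infty N_0M^m$ converges, then $N_0M^m=N_0\widetilde M^m$ for every $m\ge0$.
   Context: For a square complex matrix $M$ with Jordan decomposition $M=SJS^{-1}$, where $S$ is nonsingular and $J=\mathrm{diag}(J_{n_1}(\lambda_1),\dots,J_{n_k}(\lambda_k))$ with $J_{n_i}(\lambda_i)$ the $n_i\times n_i$ Jordan block for eigenvalue $\lambda_i$, define $\widetilde M=S\widetilde JS^{-1}$, where $\widetilde J=\mathrm{diag}(J^1,\dots,J^k)$ with $J^i=0_{n_i\times n_i}$ if $|\lambda_i|\ge1$ and $J^i=J_{n_i}(\lambda_i)$ otherwise. *)

theory Defs
  imports "Jordan_Normal_Form.Jordan_Normal_Form" Complex_Main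
begin

definition trunc_jordan_matrix :: "(nat \<times> complex) list \<Rightarrow> complex mat" where
  "trunc_jordan_matrix n_as =
     diag_block_mat (map (\<lambda>(n, a). if cmod a \<ge> 1 then 0\<^sub>m n n else jordan_block n a) n_as)"

text \<open>Given a Jordan decomposition M = S * jordan_matrix n_as * Sinv (with Sinv the inverse
  of S), the matrix M-tilde = S * J-tilde * Sinv.\<close>
definition mtilde :: "complex mat \<Rightarrow> complex mat \<Rightarrow> (nat \<times> complex) list \<Rightarrow> complex mat" where
  "mtilde S Sinv n_as = S * trunc_jordan_matrix n_as * Sinv"

definition mat_series_converges :: "nat \<Rightarrow> nat \<Rightarrow> (nat \<Rightarrow> complex mat) \<Rightarrow> bool" where
  "mat_series_converges r c f \<longleftrightarrow> (\<forall>i<r. \<forall>j<c. summable (\<lambda>m. f m $$ (i, j)))"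

end

theory Submission imports Defs begin

lemma block_zero:
  fixes P :: "complex mat" and a :: complex
  assumes P: "P \<in> carrier_mat r n" and a: "cmod a \<ge> 1"
  and lim: "\<And>i j. i < r \<Longrightarrow> j < n \<Longrightarrow> (\<lambda>m. (P * jordan_block n a ^\<^sub>m m) $$ (i,j)) \<longlonglongrightarrow> 0"
  shows "P = 0\<^sub>m r n"
proof (rule ccontr)
  assume "P \<noteq> 0\<^sub>m r n"
  then obtain i j where ij: "i < r" "j < n" "P $$ (i,j) \<noteq> 0"
    using P by (metis carrier_matD(1) carrier_matD(2) eq_matI index_zero_mat(1) index_zero_mat(2) index_zero_mat(3))
  define j0 where "j0 = (LEAST j. j < n \<and> P $$ (i,j) \<noteq> 0)"
  have j0: "j0 < n" "P $$ (i,j0) \<noteq> 0" using LeastI[of "\<lambda>j. j < n \<and> P $$ (i,j) \<noteq> 0" j] ij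
    unfolding j0_def by auto
  have below: "P $$ (i,k) = 0" if k: "k < j0" for k
  proof -
    have "\<not> (k < n \<and> P $$ (i,k) \<noteq> 0)" using not_less_Least[of k "\<lambda>j. j < n \<and> P $$ (i,j) \<noteq> 0"] k unfolding j0_def by blast
    thus ?thesis using k j0(1) by simp
  qed
  have eq: "(P * jordan_block n a ^\<^sub>m m) $$ (i,j0) = P $$ (i,j0) * a ^ m" for m
  proof -
    have "(P * jordan_block n a ^\<^sub>m m) $$ (i,j0) =
      (\<Sum>k\<in>{0..<n}. P $$ (i,k) * (if k \<le> j0 then of_nat (m choose (j0 - k)) * a ^ (m + k - j0) else 0))"
      using P ij j0 by (simp add: jordan_block_pow scalar_prod_def)
    also have "\<dots> = P $$ (i,j0) * (of_nat (m choose 0) * a ^ (m + j0 - j0))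
       + (\<Sum>k\<in>{0..<n}-{j0}. P $$ (i,k) * (if k \<le> j0 then of_nat (m choose (j0 - k)) * a ^ (m + k - j0) else 0))"
      by (subst sum.remove[of _ j0], use j0 in auto)
    also have "(\<Sum>k\<in>{0..<n}-{j0}. P $$ (i,k) * (if k \<le> j0 then of_nat (m choose (j0 - k)) * a ^ (m + k - j0) else 0)) = 0"
      by (rule sum.neutral, use below in auto)
    finally show ?thesis by simp
  qed
  have "(\<lambda>m. P $$ (i,j0) * a ^ m) \<longlonglongrightarrow> 0" using lim[OF ij(1) j0(1)] unfolding eq .
  hence "(\<lambda>m. norm (P $$ (i,j0) * a ^ m)) \<longlonglongrightarrow> 0" by (simp add: tendsto_norm_zero)
  moreover have "norm (P $$ (i,j0) * a ^ m) \<ge> norm (P $$ (i,j0))" for m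
    using a by (simp add: norm_mult norm_power mult_le_cancel_left1 one_le_power)
  ultimately have "norm (P $$ (i,j0)) \<le> 0"
    by (intro tendsto_le[OF sequentially_bot _ tendsto_const]) auto
  thus False using j0 by simp
qed

lemma trunc_carrier: "trunc_jordan_matrix n_as \<in> carrier_mat (sum_list (map fst n_as)) (sum_list (map fst n_as))"
  unfolding trunc_jordan_matrix_def
proof (induct n_as)
  case (Cons na rest)
  obtain n a where na: "na = (n,a)" by force
  show ?case using Cons unfolding na by (auto simp: Let_def)
qed simp

lemma trunc_cons: "trunc_jordan_matrix ((n,a) # rest) =
  four_block_mat (if cmod a \<ge> 1 then 0\<^sub>m n n else jordan_block n a)
   (0\<^sub>m n (sum_list (map fst rest))) (0\<^sub>m (sum_list (map fst rest)) n) (trunc_jordan_matrix rest)"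
  using trunc_carrier[of rest] unfolding trunc_jordan_matrix_def by (auto simp: Let_def)

lemma jordan_cons: "jordan_matrix ((n,a) # rest) =
  four_block_mat (jordan_block n a)
   (0\<^sub>m n (sum_list (map fst rest))) (0\<^sub>m (sum_list (map fst rest)) n) (jordan_matrix rest)"
  using jordan_matrix_carrier[of rest] unfolding jordan_matrix_def by (auto simp: Let_def)

lemma split_mult:
  fixes P X Y :: "'a::comm_ring_1 mat"
  assumes P: "P \<in> carrier_mat r (n+n')" and X: "X \<in> carrier_mat n n" and Y: "Y \<in> carrier_mat n' n'"
  shows "P * four_block_mat X (0\<^sub>m n n') (0\<^sub>m n' n) Y =
    four_block_mat (mat r n (\<lambda>(i,j). P$$(i,j)) * X) (mat r n' (\<lambda>(i,j). P$$(i,j+n)) * Y) (0\<^sub>m 0 n) (0\<^sub>m 0 n')"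
proof -
  have Pe: "P = four_block_mat (mat r n (\<lambda>(i,j). P$$(i,j))) (mat r n' (\<lambda>(i,j). P$$(i,j+n))) (0\<^sub>m 0 n) (0\<^sub>m 0 n')"
    by (rule eq_matI, use P in auto)
  show ?thesis
    apply (subst Pe)
    apply (subst mult_four_block_mat[of _ r n _ n' _ 0 _ _ n _ n'])
    using X Y by auto
qed

lemma key:
  fixes P :: "complex mat"
  assumes "P \<in> carrier_mat r (sum_list (map fst n_as))"
  and "\<And>i j. i < r \<Longrightarrow> j < sum_list (map fst n_as) \<Longrightarrow> (\<lambda>m. (P * jordan_matrix n_as ^\<^sub>m m) $$ (i,j)) \<longlonglongrightarrow> 0"
  shows "P * jordan_matrix n_as ^\<^sub>m m = P * trunc_jordan_matrix n_as ^\<^sub>m m"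
  using assms
proof (induct n_as arbitrary: P m)
  case Nil
  then show ?case by (simp add: trunc_jordan_matrix_def jordan_matrix_def)
next
  case (Cons na rest)
  obtain n a where na: "na = (n,a)" by force
  define n' where "n' = sum_list (map fst rest)"
  define P1 where "P1 = mat r n (\<lambda>(i,j). P$$(i,j))"
  define P2 where "P2 = mat r n' (\<lambda>(i,j). P$$(i,j+n))"
  define B where "B = (if cmod a \<ge> 1 then 0\<^sub>m n n else jordan_block n a)"
  have P: "P \<in> carrier_mat r (n+n')" using Cons(2) unfolding na n'_def by simp
  have Bc: "B \<in> carrier_mat n n" unfolding B_def by auto
  have J': "jordan_matrix rest \<in> carrier_mat n' n'" unfolding n'_def by simp
  have T': "trunc_jordan_matrix rest \<in> carrier_mat n' n'" unfolding n'_def by (rule trunc_carrier)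
  have Jm: "jordan_matrix (na#rest) ^\<^sub>m k = four_block_mat (jordan_block n a ^\<^sub>m k) (0\<^sub>m n n') (0\<^sub>m n' n) (jordan_matrix rest ^\<^sub>m k)" for k
    unfolding na jordan_cons n'_def[symmetric] by (rule pow_four_block_mat, auto simp: n'_def)
  have Tm: "trunc_jordan_matrix (na#rest) ^\<^sub>m k = four_block_mat (B ^\<^sub>m k) (0\<^sub>m n n') (0\<^sub>m n' n) (trunc_jordan_matrix rest ^\<^sub>m k)" for k
    unfolding na trunc_cons n'_def[symmetric] B_def[symmetric] by (rule pow_four_block_mat[OF Bc T'])
  have PJ: "P * jordan_matrix (na#rest) ^\<^sub>m k = four_block_mat (P1 * jordan_block n a ^\<^sub>m k) (P2 * jordan_matrix rest ^\<^sub>m k) (0\<^sub>m 0 n) (0\<^sub>m 0 n')" for k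
    unfolding Jm P1_def P2_def by (rule split_mult[OF P], use J' in auto)
  have PT: "P * trunc_jordan_matrix (na#rest) ^\<^sub>m k = four_block_mat (P1 * B ^\<^sub>m k) (P2 * trunc_jordan_matrix rest ^\<^sub>m k) (0\<^sub>m 0 n) (0\<^sub>m 0 n')" for k
    unfolding Tm P1_def P2_def by (rule split_mult[OF P], use Bc T' in auto)
  have P1c: "P1 \<in> carrier_mat r n" and P2c: "P2 \<in> carrier_mat r n'" unfolding P1_def P2_def by auto
  have lim1: "(\<lambda>m. (P1 * jordan_block n a ^\<^sub>m m) $$ (i,j)) \<longlonglongrightarrow> 0" if "i < r" "j < n" for i j
  proof -
    have "(P * jordan_matrix (na#rest) ^\<^sub>m m) $$ (i,j) = (P1 * jordan_block n a ^\<^sub>m m) $$ (i,j)" for m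
      unfolding PJ using that P1c P2c J' by simp
    with Cons(3)[of i j] that show ?thesis unfolding na by simp
  qed
  have lim2: "(\<lambda>m. (P2 * jordan_matrix rest ^\<^sub>m m) $$ (i,j)) \<longlonglongrightarrow> 0" if "i < r" "j < n'" for i j
  proof -
    have "(P * jordan_matrix (na#rest) ^\<^sub>m m) $$ (i,j+n) = (P2 * jordan_matrix rest ^\<^sub>m m) $$ (i,j)" for m
      unfolding PJ using that P1c P2c J' by simp
    with Cons(3)[of i "j+n"] that show ?thesis unfolding na n'_def by simp
  qed
  have IH: "P2 * jordan_matrix rest ^\<^sub>m m = P2 * trunc_jordan_matrix rest ^\<^sub>m m"
    by (rule Cons(1), use P2c lim2 in \<open>auto simp: n'_def\<close>)
  have blk: "P1 * jordan_block n a ^\<^sub>m m = P1 * B ^\<^sub>m m"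
  proof (cases "cmod a \<ge> 1")
    case True
    have "P1 = 0\<^sub>m r n" by (rule block_zero[OF P1c True lim1])
    then show ?thesis using Bc by simp
  next
    case False
    then show ?thesis unfolding B_def by simp
  qed
  show ?case unfolding PJ PT IH blk ..
qed

theorem lemmaA1:
  fixes M N0 S Sinv :: "complex mat" and n_as :: "(nat \<times> complex) list" and N r :: nat
  assumes "M \<in> carrier_mat N N"
    and "N0 \<in> carrier_mat r N"
    and "similar_mat_wit M (jordan_matrix n_as) S Sinv"
    and "mat_series_converges r N (\<lambda>m. N0 * M ^\<^sub>m m)"
  shows "\<forall>m. N0 * M ^\<^sub>m m = N0 * (mtilde S Sinv n_as) ^\<^sub>m m"
proof
  fix m
  let ?J = "jordan_matrix n_as"
  let ?T = "trunc_jordan_matrix n_as"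
  have Mc: "M \<in> carrier_mat N N" and N0c: "N0 \<in> carrier_mat r N" by fact+
  from assms(3) Mc have Jc: "?J \<in> carrier_mat N N" and Sc: "S \<in> carrier_mat N N" and Ic: "Sinv \<in> carrier_mat N N"
    and SI: "S * Sinv = 1\<^sub>m N" and IS: "Sinv * S = 1\<^sub>m N" and ME: "M = S * ?J * Sinv"
    unfolding similar_mat_wit_def Let_def by auto
  have sN: "sum_list (map fst n_as) = N" using Jc by auto
  have Tc: "?T \<in> carrier_mat N N" using trunc_carrier[of n_as] sN by simp
  have powM: "M ^\<^sub>m k = S * ?J ^\<^sub>m k * Sinv" for k
    using similar_mat_wit_pow[OF assms(3), of k] unfolding similar_mat_wit_def Let_def by auto
  have simT: "similar_mat_wit (mtilde S Sinv n_as) ?T S Sinv"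
    unfolding similar_mat_wit_def Let_def mtilde_def using Sc Ic Tc SI IS by auto
  have powT: "mtilde S Sinv n_as ^\<^sub>m k = S * ?T ^\<^sub>m k * Sinv" for k
    using similar_mat_wit_pow[OF simT, of k] unfolding similar_mat_wit_def Let_def by auto
  define P where "P = N0 * S"
  have Pc: "P \<in> carrier_mat r N" unfolding P_def using N0c Sc by auto
  have PJ: "P * ?J ^\<^sub>m k = N0 * M ^\<^sub>m k * S" for k
  proof -
    have Jk: "?J ^\<^sub>m k \<in> carrier_mat N N" using Jc by auto
    have "N0 * M ^\<^sub>m k * S = N0 * (S * ?J ^\<^sub>m k * Sinv) * S" by (simp add: powM)
    also have "\<dots> = N0 * S * ?J ^\<^sub>m k * (Sinv * S)"
      using N0c Sc Ic Jk by (simp add: assoc_mult_mat[of _ N N _ N _ N] assoc_mult_mat[of _ r N _ N _ N])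
    also have "\<dots> = P * ?J ^\<^sub>m k" using IS N0c Sc Jk unfolding P_def
      by (metis mult_carrier_mat right_mult_one_mat)
    finally show ?thesis by simp
  qed
  have lim: "(\<lambda>m. (P * ?J ^\<^sub>m m) $$ (i,j)) \<longlonglongrightarrow> 0" if ij: "i < r" "j < sum_list (map fst n_as)" for i j
  proof -
    have e: "(P * ?J ^\<^sub>m m) $$ (i,j) = (\<Sum>k\<in>{0..<N}. (N0 * M ^\<^sub>m m) $$ (i,k) * S $$ (k,j))" for m
      unfolding PJ using ij sN N0c Sc Mc by (simp add: scalar_prod_def)
    have "(\<lambda>m. (N0 * M ^\<^sub>m m) $$ (i,k)) \<longlonglongrightarrow> 0" if "k < N" for k
      using assms(4) ij(1) that unfolding mat_series_converges_def by (blast intro: summable_LIMSEQ_zero)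
    then show ?thesis unfolding e
      by (intro tendsto_null_sum) (auto intro: tendsto_mult_left_zero)
  qed
  have key': "P * ?J ^\<^sub>m m = P * ?T ^\<^sub>m m"
    by (rule key, use Pc sN lim in auto)
  have Jm: "?J ^\<^sub>m m \<in> carrier_mat N N" and Tm: "?T ^\<^sub>m m \<in> carrier_mat N N" using Jc Tc by auto
  have "N0 * M ^\<^sub>m m = P * ?J ^\<^sub>m m * Sinv"
    unfolding powM P_def using N0c Sc Ic Jm by (simp add: assoc_mult_mat[of _ r N _ N _ N])
  also have "\<dots> = P * ?T ^\<^sub>m m * Sinv" by (simp add: key')
  also have "\<dots> = N0 * (mtilde S Sinv n_as) ^\<^sub>m m"
    unfolding powT P_def using N0c Sc Ic Tm by (simp add: assoc_mult_mat[of _ r N _ N _ N])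
  finally show "N0 * M ^\<^sub>m m = N0 * (mtilde S Sinv n_as) ^\<^sub>m m" .
qed

end
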